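(* Let $n\ge1$, $r\ge0$ and $0\le k\le n$. Then $\kappa\,d\,\mathcal{J}_r\Lambda^k(\mathbb{R}^n)=\mathcal{J}_r\Lambda^k(\mathbb{R}^n)$.
   Context: For a multi-index $\alpha\in\mathbb{N}^n$ and $\sigma=\{\sigma(1)<\dots<\sigma(k)\}\subset\{1,\dots,n\}$, the form monomial is $x^\alpha dx_\sigma:=x_1^{\alpha_1}\cdots x_n^{\alpha_n}\,dx_{\sigma(1)}\wedge\cdots\wedge dx_{\sigma(k)}$. $\mathcal{H}_r\Lambda^k(\mathbb{R}^n)$ is the span of form monomials with $|\alpha|=r$, $|\sigma|=k$. $d$ is the exterior derivative. The Koszul operator is $\kappa(x^\alpha dx_\sigma)=\sum_{i=1}^k(-1)^{i+1}x^\alpha x_{\sigma(i)}\,dx_{\sigma(1)}\wedge\cdots\wedge\widehat{dx_{\sigma(i)}}\wedge\cdots\wedge dx_{\sigma(k)}$, extended linearly. The linear degree is $\mathrm{ldeg}(x^\alpha dx_\sigma):=\#\{i\notin\sigma:\alpha_i=1\}$; $\mathcal{H}_{r,l}\Lambda^k$ is the span of form monomials in $\mathcal{H}_r\Lambda^k$ with linear degree $\ge l$; and $\mathcal{J}_r\Lambda^k(\mathbb{R}^n):=\sum_{l\ge1}\kappa\,\mathcal{H}_{r+l-1,l}\Lambda^{k+1}(\mathbb{R}^n)$ (with $\Lambda^{n+1}=0$). *)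

theory Defs
  imports Complex_Main
begin

text \<open>Polynomial differential forms on R^n are represented by their coefficient functions:
  a form is  omega :: (nat => nat) => nat set => real, where  omega alpha sigma  is the
  coefficient of the form monomial  x^alpha dx_sigma.  Coordinates are indexed 0..n-1,
  multi-indices alpha satisfy alpha i = 0 for i >= n, and sigma is a subset of {..<n}
  (the wedge product is taken in increasing order of sigma).\<close>

type_synonym form = "(nat \<Rightarrow> nat) \<Rightarrow> nat set \<Rightarrow> real"

definition sgnpos :: "nat \<Rightarrow> nat set \<Rightarrow> real" where
  "sgnpos j tau = (-1) ^ card {s \<in> tau. s < j}"

text \<open>Exterior derivative, coefficientwise:
  d(x^alpha dx_sigma) = sum over j not in sigma of alpha_j x^(alpha-e_j) dx_j wedge dx_sigma.\<close>
definition extd :: "form \<Rightarrow> form" where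
  "extd omega = (\<lambda>beta tau. \<Sum>j\<in>tau. sgnpos j tau * real (beta j + 1)
        * omega (beta(j := beta j + 1)) (tau - {j}))"

text \<open>Koszul operator, coefficientwise:
  kappa(x^alpha dx_sigma) = sum_i (-1)^(i+1) x^alpha x_(sigma(i)) dx_(sigma minus sigma(i)).\<close>
definition kappa :: "nat \<Rightarrow> form \<Rightarrow> form" where
  "kappa n omega = (\<lambda>beta tau. \<Sum>i\<in>{i. i < n \<and> i \<notin> tau \<and> 0 < beta i}.
        sgnpos i tau * omega (beta(i := beta i - 1)) (insert i tau))"

definition ldeg :: "nat \<Rightarrow> (nat \<Rightarrow> nat) \<Rightarrow> nat set \<Rightarrow> nat" where
  "ldeg n alpha sigma = card {i. i < n \<and> i \<notin> sigma \<and> alpha i = 1}"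

definition monoH :: "nat \<Rightarrow> nat \<Rightarrow> nat \<Rightarrow> (nat \<Rightarrow> nat) \<Rightarrow> nat set \<Rightarrow> bool" where
  "monoH n r k alpha sigma \<longleftrightarrow> (\<forall>i\<ge>n. alpha i = 0) \<and> (\<Sum>i<n. alpha i) = r
      \<and> sigma \<subseteq> {..<n} \<and> card sigma = k"

text \<open>H_{r,l} Lambda^k(R^n): span of the form monomials in H_r Lambda^k with linear degree >= l,
  i.e. the forms whose coefficients vanish off these (finitely many) monomials.\<close>
definition Hrl :: "nat \<Rightarrow> nat \<Rightarrow> nat \<Rightarrow> nat \<Rightarrow> form set" where
  "Hrl n r l k = {omega. \<forall>alpha sigma. omega alpha sigma \<noteq> 0 \<longrightarrow>
        monoH n r k alpha sigma \<and> l \<le> ldeg n alpha sigma}"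

text \<open>J_r Lambda^k(R^n) = sum over l >= 1 of kappa H_{r+l-1,l} Lambda^{k+1}(R^n)
  (sum of subspaces = set of finite sums).\<close>
definition Jr :: "nat \<Rightarrow> nat \<Rightarrow> nat \<Rightarrow> form set" where
  "Jr n r k = {eta. \<exists>L w. finite L \<and> L \<subseteq> {1..} \<and>
        (\<forall>l\<in>L. w l \<in> Hrl n (r + l - 1) l (k + 1)) \<and>
        eta = (\<lambda>beta tau. \<Sum>l\<in>L. kappa n (w l) beta tau)}"

end

theory Submission
  imports Defs
begin

lemma sg_insert:
  assumes "i \<notin> \<tau>"
  shows "sgnpos j (insert i \<tau>) = (if i < j then -1 else 1) * sgnpos j \<tau>"
proof -
  have fin: "finite {s \<in> \<tau>. s < j}" by (rule finite_subset[of _ "{..<j}"]) auto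
  show ?thesis
  proof (cases "i < j")
    case True
    then have "{s \<in> insert i \<tau>. s < j} = insert i {s \<in> \<tau>. s < j}" by auto
    then show ?thesis using True fin assms by (simp add: sgnpos_def)
  next
    case False
    then have "{s \<in> insert i \<tau>. s < j} = {s \<in> \<tau>. s < j}" by auto
    then show ?thesis using False by (simp add: sgnpos_def)
  qed
qed

lemma sg_sq: "sgnpos j \<tau> * sgnpos j \<tau> = 1"
  unfolding sgnpos_def by (simp flip: power_add)

lemma sg_remove:
  assumes "j \<in> \<tau>"
  shows "sgnpos i (\<tau> - {j}) = (if j < i then -1 else 1) * sgnpos i \<tau>"
proof -
  have "sgnpos i \<tau> = (if j < i then -1 else 1) * sgnpos i (\<tau> - {j})"
    using sg_insert[of j "\<tau> - {j}" i] assms by (simp add: insert_absorb)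
  then show ?thesis by auto
qed

lemma kappa_sum: "kappa n (\<lambda>\<beta> \<tau>. \<Sum>l\<in>L. f l \<beta> \<tau>) = (\<lambda>\<beta> \<tau>. \<Sum>l\<in>L. kappa n (f l) \<beta> \<tau>)"
  unfolding kappa_def by (auto simp: sum_distrib_left intro!: ext sum.swap)

lemma extd_sum: "extd (\<lambda>\<beta> \<tau>. \<Sum>l\<in>L. f l \<beta> \<tau>) = (\<lambda>\<beta> \<tau>. \<Sum>l\<in>L. extd (f l) \<beta> \<tau>)"
  unfolding extd_def by (auto simp: sum_distrib_left intro!: ext sum.swap)

lemma kappa_scale: "kappa n (\<lambda>\<beta> \<tau>. c * f \<beta> \<tau>) = (\<lambda>\<beta> \<tau>. c * kappa n f \<beta> \<tau>)"
  unfolding kappa_def by (auto simp: sum_distrib_left intro!: ext sum.cong)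

lemma kappa_diff: "kappa n (\<lambda>\<beta> \<tau>. f \<beta> \<tau> - g \<beta> \<tau>) = (\<lambda>\<beta> \<tau>. kappa n f \<beta> \<tau> - kappa n g \<beta> \<tau>)"
  unfolding kappa_def by (auto simp: algebra_simps sum_subtractf intro!: ext)

lemma L1:
  assumes fin: "finite \<tau>" and i: "i \<notin> \<tau>" and b: "0 < \<beta> i"
  shows "sgnpos i \<tau> * extd \<omega> (\<beta>(i := \<beta> i - 1)) (insert i \<tau>) = real (\<beta> i) * \<omega> \<beta> \<tau>
     + (\<Sum>j\<in>\<tau>. (if i < j then -1 else 1) * (sgnpos i \<tau> * sgnpos j \<tau> * real (\<beta> j + 1)
          * \<omega> (\<beta>(i := \<beta> i - 1, j := \<beta> j + 1)) (insert i (\<tau> - {j}))))"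
proof -
  have t1: "sgnpos i (insert i \<tau>) * real ((\<beta>(i := \<beta> i - 1)) i + 1)
      * \<omega> ((\<beta>(i := \<beta> i - 1))(i := (\<beta>(i := \<beta> i - 1)) i + 1)) (insert i \<tau> - {i})
      = sgnpos i \<tau> * real (\<beta> i) * \<omega> \<beta> \<tau>"
  proof -
    have "(\<beta>(i := \<beta> i - 1))(i := (\<beta>(i := \<beta> i - 1)) i + 1) = \<beta>" using b by auto
    moreover have "insert i \<tau> - {i} = \<tau>" using i by auto
    moreover have "real ((\<beta>(i := \<beta> i - 1)) i + 1) = real (\<beta> i)" using b by simp
    ultimately show ?thesis using sg_insert[OF i, of i] by simp
  qed
  have t2: "sgnpos j (insert i \<tau>) * real ((\<beta>(i := \<beta> i - 1)) j + 1)
      * \<omega> ((\<beta>(i := \<beta> i - 1))(j := (\<beta>(i := \<beta> i - 1)) j + 1)) (insert i \<tau> - {j})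
      = (if i < j then -1 else 1) * (sgnpos j \<tau> * real (\<beta> j + 1)
          * \<omega> (\<beta>(i := \<beta> i - 1, j := \<beta> j + 1)) (insert i (\<tau> - {j})))" if j: "j \<in> \<tau>" for j
  proof -
    have ij: "i \<noteq> j" using i j by auto
    have "insert i \<tau> - {j} = insert i (\<tau> - {j})" using ij by auto
    then show ?thesis using ij sg_insert[OF i, of j] by simp
  qed
  have "extd \<omega> (\<beta>(i := \<beta> i - 1)) (insert i \<tau>) = sgnpos i \<tau> * real (\<beta> i) * \<omega> \<beta> \<tau>
     + (\<Sum>j\<in>\<tau>. (if i < j then -1 else 1) * (sgnpos j \<tau> * real (\<beta> j + 1)
          * \<omega> (\<beta>(i := \<beta> i - 1, j := \<beta> j + 1)) (insert i (\<tau> - {j}))))"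
    unfolding extd_def sum.insert[OF fin i] t1 using t2 by (simp cong: sum.cong)
  then have "sgnpos i \<tau> * extd \<omega> (\<beta>(i := \<beta> i - 1)) (insert i \<tau>) =
     (sgnpos i \<tau> * sgnpos i \<tau>) * real (\<beta> i) * \<omega> \<beta> \<tau>
     + (\<Sum>j\<in>\<tau>. sgnpos i \<tau> * ((if i < j then -1 else 1) * (sgnpos j \<tau> * real (\<beta> j + 1)
          * \<omega> (\<beta>(i := \<beta> i - 1, j := \<beta> j + 1)) (insert i (\<tau> - {j})))))"
    by (simp add: algebra_simps sum_distrib_left)
  then show ?thesis by (simp add: sg_sq mult_ac)
qed

lemma L2:
  assumes fin: "finite \<tau>" and j: "j \<in> \<tau>"
  shows "sgnpos j \<tau> * real (\<beta> j + 1) * kappa n \<omega> (\<beta>(j := \<beta> j + 1)) (\<tau> - {j})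
    = (if j < n then real (\<beta> j + 1) * \<omega> \<beta> \<tau> else 0)
    + (\<Sum>i\<in>{i. i < n \<and> i \<notin> \<tau> \<and> 0 < \<beta> i}. (if j < i then -1 else 1) * (sgnpos i \<tau> * sgnpos j \<tau> * real (\<beta> j + 1)
          * \<omega> (\<beta>(i := \<beta> i - 1, j := \<beta> j + 1)) (insert i (\<tau> - {j}))))"
proof -
  define I where "I = {i. i < n \<and> i \<notin> \<tau> \<and> 0 < \<beta> i}"
  have fI: "finite I" unfolding I_def by (rule finite_subset[of _ "{..<n}"]) auto
  have jI: "j \<notin> I" using j unfolding I_def by auto
  have cr: "sgnpos i (\<tau> - {j}) * \<omega> ((\<beta>(j := \<beta> j + 1))(i := (\<beta>(j := \<beta> j + 1)) i - 1)) (insert i (\<tau> - {j}))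
     = (if j < i then -1 else 1) * (sgnpos i \<tau> * \<omega> (\<beta>(i := \<beta> i - 1, j := \<beta> j + 1)) (insert i (\<tau> - {j})))"
    if iI: "i \<in> I" for i
  proof -
    have ij: "i \<noteq> j" using iI jI by auto
    have "(\<beta>(j := \<beta> j + 1))(i := (\<beta>(j := \<beta> j + 1)) i - 1) = \<beta>(i := \<beta> i - 1, j := \<beta> j + 1)"
      using ij by (auto simp: fun_upd_twist)
    then show ?thesis using sg_remove[OF j, of i] by simp
  qed
  have dg: "sgnpos j (\<tau> - {j}) * \<omega> ((\<beta>(j := \<beta> j + 1))(j := (\<beta>(j := \<beta> j + 1)) j - 1)) (insert j (\<tau> - {j}))
     = sgnpos j \<tau> * \<omega> \<beta> \<tau>"
  proof -
    have "(\<beta>(j := \<beta> j + 1))(j := (\<beta>(j := \<beta> j + 1)) j - 1) = \<beta>" by auto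
    moreover have "insert j (\<tau> - {j}) = \<tau>" using j by auto
    ultimately show ?thesis using sg_remove[OF j, of j] by simp
  qed
  have set: "{i. i < n \<and> i \<notin> \<tau> - {j} \<and> 0 < (\<beta>(j := \<beta> j + 1)) i} = (if j < n then insert j I else I)"
    unfolding I_def by auto
  have K: "kappa n \<omega> (\<beta>(j := \<beta> j + 1)) (\<tau> - {j}) = (if j < n then sgnpos j \<tau> * \<omega> \<beta> \<tau> else 0)
      + (\<Sum>i\<in>I. (if j < i then -1 else 1) * (sgnpos i \<tau> * \<omega> (\<beta>(i := \<beta> i - 1, j := \<beta> j + 1)) (insert i (\<tau> - {j}))))"
  proof (cases "j < n")
    case True
    show ?thesis unfolding kappa_def set using True
      by (simp only: if_True sum.insert[OF fI jI] dg sum.cong[OF refl cr])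
  next
    case False
    show ?thesis unfolding kappa_def set using False
      by (simp only: if_False sum.cong[OF refl cr])
  qed
  have "sgnpos j \<tau> * real (\<beta> j + 1) * kappa n \<omega> (\<beta>(j := \<beta> j + 1)) (\<tau> - {j})
     = (if j < n then (sgnpos j \<tau> * sgnpos j \<tau>) * real (\<beta> j + 1) * \<omega> \<beta> \<tau> else 0)
      + (\<Sum>i\<in>I. sgnpos j \<tau> * real (\<beta> j + 1) * ((if j < i then -1 else 1) * (sgnpos i \<tau> * \<omega> (\<beta>(i := \<beta> i - 1, j := \<beta> j + 1)) (insert i (\<tau> - {j})))))"
    unfolding K by (simp add: algebra_simps sum_distrib_left)
  then show ?thesis unfolding I_def[symmetric] by (simp add: sg_sq mult_ac)
qed

lemma homotopy:
  assumes fin: "finite \<tau>"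
  shows "kappa n (extd \<omega>) \<beta> \<tau> + extd (kappa n \<omega>) \<beta> \<tau> =
    ((\<Sum>i\<in>{i. i < n \<and> i \<notin> \<tau>}. real (\<beta> i)) + (\<Sum>j\<in>{j\<in>\<tau>. j < n}. real (\<beta> j + 1))) * \<omega> \<beta> \<tau>"
proof -
  define I where "I = {i. i < n \<and> i \<notin> \<tau> \<and> 0 < \<beta> i}"
  have fI: "finite I" unfolding I_def by (rule finite_subset[of _ "{..<n}"]) auto
  define C where "C i j = sgnpos i \<tau> * sgnpos j \<tau> * real (\<beta> j + 1)
          * \<omega> (\<beta>(i := \<beta> i - 1, j := \<beta> j + 1)) (insert i (\<tau> - {j}))" for i j
  have 1: "kappa n (extd \<omega>) \<beta> \<tau> = (\<Sum>i\<in>I. real (\<beta> i) * \<omega> \<beta> \<tau>)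
      + (\<Sum>i\<in>I. \<Sum>j\<in>\<tau>. (if i < j then -1 else 1) * C i j)"
  proof -
    have "kappa n (extd \<omega>) \<beta> \<tau> = (\<Sum>i\<in>I. sgnpos i \<tau> * extd \<omega> (\<beta>(i := \<beta> i - 1)) (insert i \<tau>))"
      unfolding kappa_def I_def by simp
    also have "\<dots> = (\<Sum>i\<in>I. real (\<beta> i) * \<omega> \<beta> \<tau> + (\<Sum>j\<in>\<tau>. (if i < j then -1 else 1) * C i j))"
    proof (rule sum.cong[OF refl])
      fix i assume "i \<in> I"
      then show "sgnpos i \<tau> * extd \<omega> (\<beta>(i := \<beta> i - 1)) (insert i \<tau>) = real (\<beta> i) * \<omega> \<beta> \<tau> + (\<Sum>j\<in>\<tau>. (if i < j then -1 else 1) * C i j)"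
        unfolding C_def by (intro L1[OF fin]) (auto simp: I_def)
    qed
    finally show ?thesis by (simp add: sum.distrib)
  qed
  have 2: "extd (kappa n \<omega>) \<beta> \<tau> = (\<Sum>j\<in>\<tau>. if j < n then real (\<beta> j + 1) * \<omega> \<beta> \<tau> else 0)
      + (\<Sum>j\<in>\<tau>. \<Sum>i\<in>I. (if j < i then -1 else 1) * C i j)"
  proof -
    have "extd (kappa n \<omega>) \<beta> \<tau> = (\<Sum>j\<in>\<tau>. sgnpos j \<tau> * real (\<beta> j + 1) * kappa n \<omega> (\<beta>(j := \<beta> j + 1)) (\<tau> - {j}))"
      unfolding extd_def by simp
    also have "\<dots> = (\<Sum>j\<in>\<tau>. (if j < n then real (\<beta> j + 1) * \<omega> \<beta> \<tau> else 0) + (\<Sum>i\<in>I. (if j < i then -1 else 1) * C i j))"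
    proof (rule sum.cong[OF refl])
      fix j assume "j \<in> \<tau>"
      then show "sgnpos j \<tau> * real (\<beta> j + 1) * kappa n \<omega> (\<beta>(j := \<beta> j + 1)) (\<tau> - {j}) = (if j < n then real (\<beta> j + 1) * \<omega> \<beta> \<tau> else 0) + (\<Sum>i\<in>I. (if j < i then -1 else 1) * C i j)"
        unfolding C_def I_def by (intro L2[OF fin])
    qed
    finally show ?thesis by (simp add: sum.distrib)
  qed
  have 3: "(\<Sum>i\<in>I. \<Sum>j\<in>\<tau>. (if i < j then -1 else 1) * C i j) + (\<Sum>j\<in>\<tau>. \<Sum>i\<in>I. (if j < i then -1 else 1) * C i j) = 0"
  proof -
    have "(\<Sum>j\<in>\<tau>. \<Sum>i\<in>I. (if j < i then -1 else 1) * C i j) = (\<Sum>i\<in>I. \<Sum>j\<in>\<tau>. (if j < i then -1 else 1) * C i j)"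
      by (rule sum.swap)
    moreover have "(\<Sum>i\<in>I. \<Sum>j\<in>\<tau>. (if i < j then -1 else 1) * C i j) + (\<Sum>i\<in>I. \<Sum>j\<in>\<tau>. (if j < i then -1 else 1) * C i j) = 0"
    proof -
      have "(\<Sum>i\<in>I. \<Sum>j\<in>\<tau>. (if i < j then -1 else 1) * C i j) + (\<Sum>i\<in>I. \<Sum>j\<in>\<tau>. (if j < i then -1 else 1) * C i j)
         = (\<Sum>i\<in>I. \<Sum>j\<in>\<tau>. ((if i < j then -1 else 1) * C i j + (if j < i then -1 else 1) * C i j))"
        by (simp add: sum.distrib)
      also have "\<dots> = 0"
        by (rule sum.neutral, rule ballI, rule sum.neutral) (auto simp: I_def)
      finally show ?thesis .
    qed
    ultimately show ?thesis by simp
  qed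
  have 4: "(\<Sum>i\<in>I. real (\<beta> i)) = (\<Sum>i\<in>{i. i < n \<and> i \<notin> \<tau>}. real (\<beta> i))"
    by (rule sum.mono_neutral_left) (auto simp: I_def)
  have 5: "(\<Sum>j\<in>\<tau>. if j < n then real (\<beta> j + 1) * \<omega> \<beta> \<tau> else 0) = (\<Sum>j\<in>{j\<in>\<tau>. j < n}. real (\<beta> j + 1)) * \<omega> \<beta> \<tau>"
    using fin by (simp add: sum.inter_filter[symmetric] sum_distrib_right)
  have "kappa n (extd \<omega>) \<beta> \<tau> + extd (kappa n \<omega>) \<beta> \<tau> = (\<Sum>i\<in>I. real (\<beta> i)) * \<omega> \<beta> \<tau>
     + (\<Sum>j\<in>\<tau>. if j < n then real (\<beta> j + 1) * \<omega> \<beta> \<tau> else 0)"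
    using 1 2 3 by (simp add: sum_distrib_right[symmetric] algebra_simps)
  then show ?thesis using 4 5 by (simp add: algebra_simps)
qed

lemma kappa_kappa: "kappa n (kappa n \<omega>) \<beta> \<tau> = 0"
proof -
  define I where "I = {i. i < n \<and> i \<notin> \<tau> \<and> 0 < \<beta> i}"
  have fI: "finite I" unfolding I_def by (rule finite_subset[of _ "{..<n}"]) auto
  define F where "F i i' = sgnpos i \<tau> * sgnpos i' \<tau> * \<omega> (\<beta>(i := \<beta> i - 1, i' := \<beta> i' - 1)) (insert i' (insert i \<tau>))" for i i'
  have Fs: "F i i' = F i' i" if "i \<noteq> i'" for i i'
    unfolding F_def using that by (simp add: fun_upd_twist insert_commute mult_ac)
  define h where "h i i' = (if i = i' then 0 else (if i < i' then -1 else 1) * F i i')" for i i'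
  have ha: "h i i' = - h i' i" for i i'
    unfolding h_def using Fs[of i i'] by auto
  have inner: "kappa n \<omega> (\<beta>(i := \<beta> i - 1)) (insert i \<tau>) * sgnpos i \<tau> = (\<Sum>i'\<in>I. h i i')" if iI: "i \<in> I" for i
  proof -
    have set: "{i'. i' < n \<and> i' \<notin> insert i \<tau> \<and> 0 < (\<beta>(i := \<beta> i - 1)) i'} = {i'\<in>I. i' \<noteq> i}"
      unfolding I_def by auto
    have "kappa n \<omega> (\<beta>(i := \<beta> i - 1)) (insert i \<tau>) * sgnpos i \<tau>
       = (\<Sum>i'\<in>{i'\<in>I. i' \<noteq> i}. sgnpos i' (insert i \<tau>) * \<omega> ((\<beta>(i := \<beta> i - 1))(i' := (\<beta>(i := \<beta> i - 1)) i' - 1)) (insert i' (insert i \<tau>)) * sgnpos i \<tau>)"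
      unfolding kappa_def set by (simp add: sum_distrib_right)
    also have "\<dots> = (\<Sum>i'\<in>{i'\<in>I. i' \<noteq> i}. h i i')"
    proof (rule sum.cong[OF refl])
      fix i' assume "i' \<in> {i'\<in>I. i' \<noteq> i}"
      then have ii: "i' \<noteq> i" and "i \<notin> \<tau>" using iI by (auto simp: I_def)
      then show "sgnpos i' (insert i \<tau>) * \<omega> ((\<beta>(i := \<beta> i - 1))(i' := (\<beta>(i := \<beta> i - 1)) i' - 1)) (insert i' (insert i \<tau>)) * sgnpos i \<tau> = h i i'"
        unfolding h_def F_def using sg_insert[of i \<tau> i'] by (simp add: mult_ac)
    qed
    also have "\<dots> = (\<Sum>i'\<in>I. h i i')"
      using fI by (auto simp: sum.inter_filter h_def intro!: sum.cong)
    finally show ?thesis .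
  qed
  have "kappa n (kappa n \<omega>) \<beta> \<tau> = (\<Sum>i\<in>I. \<Sum>i'\<in>I. h i i')"
    unfolding kappa_def[of n "kappa n \<omega>"] I_def[symmetric]
    by (rule sum.cong[OF refl]) (simp add: inner[symmetric] mult_ac)
  moreover have "(\<Sum>i\<in>I. \<Sum>i'\<in>I. h i i') = - (\<Sum>i\<in>I. \<Sum>i'\<in>I. h i i')"
  proof -
    have "(\<Sum>i\<in>I. \<Sum>i'\<in>I. h i i') = (\<Sum>i'\<in>I. \<Sum>i\<in>I. h i i')" by (rule sum.swap)
    also have "\<dots> = (\<Sum>i'\<in>I. \<Sum>i\<in>I. - h i' i)" by (simp add: ha[symmetric])
    also have "\<dots> = - (\<Sum>i\<in>I. \<Sum>i'\<in>I. h i i')" by (simp add: sum_negf)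
    finally show ?thesis .
  qed
  ultimately show ?thesis by simp
qed

lemma extd_inf: "infinite \<tau> \<Longrightarrow> extd \<omega> \<beta> \<tau> = 0"
  unfolding extd_def by simp

lemma kdk:
  assumes w: "\<omega> \<in> Hrl n s l (Suc k)"
  shows "kappa n (extd (kappa n \<omega>)) = (\<lambda>\<beta> \<tau>. real (s + k + 1) * kappa n \<omega> \<beta> \<tau>)"
proof -
  have e: "extd (kappa n \<omega>) = (\<lambda>\<beta> \<tau>. real (s + k + 1) * \<omega> \<beta> \<tau> - kappa n (extd \<omega>) \<beta> \<tau>)"
  proof (intro ext)
    fix \<beta> \<tau>
    show "extd (kappa n \<omega>) \<beta> \<tau> = real (s + k + 1) * \<omega> \<beta> \<tau> - kappa n (extd \<omega>) \<beta> \<tau>"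
    proof (cases "\<omega> \<beta> \<tau> = 0")
      case True
      show ?thesis
      proof (cases "finite \<tau>")
        case True
        then show ?thesis using homotopy[OF True, of n \<omega> \<beta>] \<open>\<omega> \<beta> \<tau> = 0\<close> by simp
      next
        case False
        then show ?thesis using \<open>\<omega> \<beta> \<tau> = 0\<close> by (simp add: extd_inf kappa_def)
      qed
    next
      case False
      then have m: "monoH n s (Suc k) \<beta> \<tau>" using w unfolding Hrl_def by auto
      then have sub: "\<tau> \<subseteq> {..<n}" and ct: "card \<tau> = Suc k" and sm: "(\<Sum>i<n. \<beta> i) = s"
        unfolding monoH_def by auto
      have fin: "finite \<tau>" using sub finite_subset by blast
      have f2: "{j\<in>\<tau>. j < n} = \<tau>" using sub by auto
      have un: "{..<n} = {i. i < n \<and> i \<notin> \<tau>} \<union> \<tau>" using sub by auto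
      have "(\<Sum>i<n. \<beta> i) = (\<Sum>i\<in>{i. i < n \<and> i \<notin> \<tau>}. \<beta> i) + (\<Sum>i\<in>\<tau>. \<beta> i)"
        unfolding un by (rule sum.union_disjoint) (use fin in auto)
      then have "real s = (\<Sum>i\<in>{i. i < n \<and> i \<notin> \<tau>}. real (\<beta> i)) + (\<Sum>i\<in>\<tau>. real (\<beta> i))"
        using sm by (metis of_nat_add of_nat_sum)
      moreover have "(\<Sum>j\<in>\<tau>. real (\<beta> j + 1)) = (\<Sum>i\<in>\<tau>. real (\<beta> i)) + real (Suc k)"
        using ct by (simp add: sum.distrib)
      ultimately have "(\<Sum>i\<in>{i. i < n \<and> i \<notin> \<tau>}. real (\<beta> i)) + (\<Sum>j\<in>{j\<in>\<tau>. j < n}. real (\<beta> j + 1)) = real (s + k + 1)"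
        unfolding f2 by simp
      then show ?thesis using homotopy[OF fin, of n \<omega> \<beta>] by simp
    qed
  qed
  show ?thesis unfolding e kappa_diff kappa_scale by (simp add: kappa_kappa)
qed

lemma Hrl_scale: "\<omega> \<in> Hrl n s l m \<Longrightarrow> (\<lambda>\<beta> \<tau>. c * \<omega> \<beta> \<tau>) \<in> Hrl n s l m"
  unfolding Hrl_def by auto

lemma kdJ:
  assumes "L \<subseteq> {1..}" "\<forall>l\<in>L. w l \<in> Hrl n (r + l - 1) l (k + 1)"
  shows "kappa n (extd (\<lambda>\<beta> \<tau>. \<Sum>l\<in>L. kappa n (w l) \<beta> \<tau>))
     = (\<lambda>\<beta> \<tau>. \<Sum>l\<in>L. kappa n (\<lambda>\<beta> \<tau>. real (r + l - 1 + k + 1) * w l \<beta> \<tau>) \<beta> \<tau>)"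
  unfolding extd_sum kappa_sum
proof (intro ext sum.cong[OF refl])
  fix \<beta> \<tau> l assume "l \<in> L"
  then have "w l \<in> Hrl n (r + l - 1) l (Suc k)" using assms by simp
  from kdk[OF this] show "kappa n (\<lambda>a b. extd (kappa n (w l)) a b) \<beta> \<tau> =
         kappa n (\<lambda>\<beta> \<tau>. real (r + l - 1 + k + 1) * w l \<beta> \<tau>) \<beta> \<tau>"
    by (simp add: kappa_scale)
qed

theorem mainTheorem12:
  fixes n r k :: nat
  assumes "1 \<le> n" and "k \<le> n"
  shows "(\<lambda>omega. kappa n (extd omega)) ` Jr n r k = Jr n r k"
proof
  show "(\<lambda>omega. kappa n (extd omega)) ` Jr n r k \<subseteq> Jr n r k"
  proof
    fix x assume "x \<in> (\<lambda>omega. kappa n (extd omega)) ` Jr n r k"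
    then obtain L w where L: "finite L" "L \<subseteq> {1..}" "\<forall>l\<in>L. w l \<in> Hrl n (r + l - 1) l (k + 1)"
      and x: "x = kappa n (extd (\<lambda>\<beta> \<tau>. \<Sum>l\<in>L. kappa n (w l) \<beta> \<tau>))"
      unfolding Jr_def by auto
    show "x \<in> Jr n r k" unfolding Jr_def x kdJ[OF L(2,3)]
      using L by (auto intro!: exI[of _ L] exI[of _ "\<lambda>l \<beta> \<tau>. real (r + l - 1 + k + 1) * w l \<beta> \<tau>"] Hrl_scale)
  qed
next
  show "Jr n r k \<subseteq> (\<lambda>omega. kappa n (extd omega)) ` Jr n r k"
  proof
    fix x assume "x \<in> Jr n r k"
    then obtain L w where L: "finite L" "L \<subseteq> {1..}" "\<forall>l\<in>L. w l \<in> Hrl n (r + l - 1) l (k + 1)"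
      and x: "x = (\<lambda>\<beta> \<tau>. \<Sum>l\<in>L. kappa n (w l) \<beta> \<tau>)"
      unfolding Jr_def by auto
    define w' where "w' l = (\<lambda>\<beta> \<tau>. inverse (real (r + l - 1 + k + 1)) * w l \<beta> \<tau>)" for l
    have L': "\<forall>l\<in>L. w' l \<in> Hrl n (r + l - 1) l (k + 1)" using L(3) unfolding w'_def by (auto intro: Hrl_scale)
    have y: "(\<lambda>\<beta> \<tau>. \<Sum>l\<in>L. kappa n (w' l) \<beta> \<tau>) \<in> Jr n r k"
      unfolding Jr_def using L L' by auto
    have "kappa n (extd (\<lambda>\<beta> \<tau>. \<Sum>l\<in>L. kappa n (w' l) \<beta> \<tau>)) = x"
      unfolding kdJ[OF L(2) L'] x
    proof (intro ext sum.cong[OF refl])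
      fix \<beta> \<tau> l assume "l \<in> L"
      have c: "real (r + l - 1 + k + 1) \<noteq> 0" by simp
      have "(\<lambda>\<beta> \<tau>. real (r + l - 1 + k + 1) * w' l \<beta> \<tau>) = w l"
      proof (intro ext)
        fix a b
        show "real (r + l - 1 + k + 1) * w' l a b = w l a b"
          unfolding w'_def mult.assoc[symmetric] right_inverse[OF c] by (rule mult_1)
      qed
      then show "kappa n (\<lambda>\<beta> \<tau>. real (r + l - 1 + k + 1) * w' l \<beta> \<tau>) \<beta> \<tau> = kappa n (w l) \<beta> \<tau>"
        by (simp only:)
    qed
    then show "x \<in> (\<lambda>omega. kappa n (extd omega)) ` Jr n r k" by (rule image_eqI[OF sym y])
  qed
qed

end
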